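(* Let $x$ be a sequence of length $n$ and $i,j\in\{1,\ldots,n-1\}$ with $i\ne j$. Then $\tau(x,i)\not\approx_{CT}\tau(x,j)$.
   Context: Sequences are finite sequences of pairwise distinct integers indexed from $1$. For $1\le i\le n-1$, $\tau(x,i)$ is obtained from $x$ by exchanging $x[i]$ and $x[i+1]$. The Cartesian tree $C(x)$ of a sequence $x$ of length $n$ is empty if $n=0$; otherwise, if $x[i]$ is the minimum of $x$, it is the binary tree with root $i$, left subtree $C(x[1\ldots i-1])$ and right subtree $C(x[i+1\ldots n])$. $x\approx_{CT} y$ means $C(x)=C(y)$. *)

theory Defs
  imports Main "HOL-Library.Tree"
begin

text \<open>Sequences are lists of pairwise distinct integers; position p (1-based)
  corresponds to list index p - 1.\<close>

definition tau :: "int list \<Rightarrow> nat \<Rightarrow> int list" where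
  "tau x i = x[i - 1 := x ! i, i := x ! (i - 1)]"

definition minpos :: "int list \<Rightarrow> nat" where
  "minpos xs = length (takeWhile (\<lambda>y. y \<noteq> Min (set xs)) xs)"

lemma takeWhile_less_aux: "a \<in> set xs \<Longrightarrow> length (takeWhile (\<lambda>y. y \<noteq> a) xs) < length xs"
  by (induction xs) auto

lemma minpos_less: "xs \<noteq> [] \<Longrightarrow> minpos xs < length xs"
  unfolding minpos_def
  by (rule takeWhile_less_aux) simp

text \<open>Cartesian tree: root labelled by the 1-based position of the minimum,
  left subtree the tree of the prefix, right subtree the tree of the suffix
  (labels of each subtree are positions within the respective subsequence).\<close>
function CT :: "int list \<Rightarrow> nat tree" where
  "CT xs = (if xs = [] then Leaf
            else Node (CT (take (minpos xs) xs)) (Suc (minpos xs)) (CT (drop (Suc (minpos xs)) xs)))"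
  by pat_completeness auto
termination
  by (relation "measure length") (auto dest: minpos_less)

definition ct_equiv :: "int list \<Rightarrow> int list \<Rightarrow> bool" (infix "\<approx>\<^sub>C\<^sub>T" 50) where
  "x \<approx>\<^sub>C\<^sub>T y \<longleftrightarrow> CT x = CT y"

end

theory Submission
  imports Defs
begin

declare CT.simps[simp del]

lemma CT_Nil[simp]: "CT [] = Leaf"
  by (subst CT.simps) simp

lemma CT_ne: "xs \<noteq> [] \<Longrightarrow> CT xs = Node (CT (take (minpos xs) xs)) (Suc (minpos xs)) (CT (drop (Suc (minpos xs)) xs))"
  by (subst CT.simps) simp

lemma minpos_nth: "ys \<noteq> [] \<Longrightarrow> ys ! minpos ys = Min (set ys)"
  using minpos_less[of ys] nth_length_takeWhile[of "\<lambda>y. y \<noteq> Min (set ys)" ys]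
  unfolding minpos_def by auto

lemma minpos_lt: "distinct ys \<Longrightarrow> k < length ys \<Longrightarrow> k \<noteq> minpos ys \<Longrightarrow> ys ! minpos ys < ys ! k"
proof -
  assume d: "distinct ys" and k: "k < length ys" and ne: "k \<noteq> minpos ys"
  have nn: "ys \<noteq> []" using k by auto
  have m: "minpos ys < length ys" using minpos_less[OF nn] .
  have "Min (set ys) \<le> ys ! k" using k by simp
  moreover have "ys ! k \<noteq> ys ! minpos ys" using d k m ne nth_eq_iff_index_eq by blast
  ultimately show ?thesis using minpos_nth[OF nn] by simp
qed

lemma ct_cmp:
  "distinct y \<Longrightarrow> distinct z \<Longrightarrow> CT y = CT z \<Longrightarrow>
   length y = length z \<and> (\<forall>k. Suc k < length y \<longrightarrow> (y!k < y!Suc k \<longleftrightarrow> z!k < z!Suc k))"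
proof (induction y arbitrary: z rule: length_induct)
  case (1 y)
  show ?case
  proof (cases "y = []")
    case True
    then have "CT z = Leaf" using 1 by simp
    then have "z = []" using CT_ne by fastforce
    then show ?thesis using True by simp
  next
    case False
    have zn: "z \<noteq> []"
    proof
      assume "z = []"
      then have "CT y = Leaf" using 1 by simp
      then show False using False CT_ne by fastforce
    qed
    define m where "m = minpos y"
    have my: "m < length y" using minpos_less[OF False] m_def by simp
    have mz: "minpos z < length z" using minpos_less[OF zn] .
    have eq: "Node (CT (take m y)) (Suc m) (CT (drop (Suc m) y)) =
              Node (CT (take (minpos z) z)) (Suc (minpos z)) (CT (drop (Suc (minpos z)) z))"
      using 1(4) unfolding CT_ne[OF False] CT_ne[OF zn] m_def .
    then have mm: "minpos z = m" by simp
    have e1: "CT (take m y) = CT (take m z)" using eq mm by simp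
    have e2: "CT (drop (Suc m) y) = CT (drop (Suc m) z)" using eq mm by simp

    have IH1: "length (take m y) = length (take m z) \<and>
      (\<forall>k. Suc k < length (take m y) \<longrightarrow> (take m y ! k < take m y ! Suc k \<longleftrightarrow> take m z ! k < take m z ! Suc k))"
      by (rule 1(1)[rule_format, of "take m y" "take m z"]) (use e1 my 1(2,3) in auto)
    have IH2: "length (drop (Suc m) y) = length (drop (Suc m) z) \<and>
      (\<forall>k. Suc k < length (drop (Suc m) y) \<longrightarrow> (drop (Suc m) y ! k < drop (Suc m) y ! Suc k \<longleftrightarrow> drop (Suc m) z ! k < drop (Suc m) z ! Suc k))"
      by (rule 1(1)[rule_format, of "drop (Suc m) y" "drop (Suc m) z"]) (use e2 my 1(2,3) in auto)
    have len: "length y = length z"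
    proof -
      have "length (drop (Suc m) y) = length (drop (Suc m) z)" using IH2 by blast
      then show ?thesis using my mz mm by simp
    qed
    have "Suc k < length y \<Longrightarrow> (y!k < y!Suc k \<longleftrightarrow> z!k < z!Suc k)" for k
    proof -
      assume k: "Suc k < length y"
      consider "Suc k < m" | "Suc k = m" | "k = m" | "m < k" by linarith
      then show ?thesis
      proof cases
        case 1
        then show ?thesis using IH1 my by auto
      next
        case 2
        then show ?thesis using minpos_lt[of y k] minpos_lt[of z k] `distinct y` `distinct z`
          len k m_def mm by auto
      next
        case 3
        then show ?thesis using minpos_lt[of y "Suc k"] minpos_lt[of z "Suc k"] `distinct y` `distinct z`
          len k m_def mm by auto
      next
        case 4
        then have "Suc (k - Suc m) < length (drop (Suc m) y)" using k by simp
        then have "drop (Suc m) y ! (k - Suc m) < drop (Suc m) y ! Suc (k - Suc m) \<longleftrightarrow>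
            drop (Suc m) z ! (k - Suc m) < drop (Suc m) z ! Suc (k - Suc m)" using IH2 by blast
        moreover have "Suc m + (k - Suc m) = k" "Suc m + Suc (k - Suc m) = Suc k" using 4 by auto
        ultimately show ?thesis using k len by (simp add: nth_drop)
      qed
    qed
    then show ?thesis using len by blast
  qed
qed

lemma lt_case:
  assumes d: "distinct x" and i1: "1 \<le> i" and ij: "i < j" and jl: "j \<le> length x - 1"
    and eq: "CT (tau x i) = CT (tau x j)"
  shows False
proof -
  obtain p where p: "i = Suc p" using i1 by (cases i) auto
  have dy: "distinct (tau x i)" unfolding tau_def using d p ij jl by (simp add: distinct_swap)
  have dz: "distinct (tau x j)" unfolding tau_def using d p ij jl by (simp add: distinct_swap)
  have C: "\<And>k. Suc k < length x \<Longrightarrow> (tau x i ! k < tau x i ! Suc k \<longleftrightarrow> tau x j ! k < tau x j ! Suc k)"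
    using ct_cmp[OF dy dz eq] by (simp add: tau_def)
  have jl': "j < length x" using jl ij by linarith
  have ne1: "x ! p \<noteq> x ! i" using d p jl' ij by (simp add: nth_eq_iff_index_eq)
  show False
  proof (cases "j = Suc i")
    case True
    have ne2: "x ! p \<noteq> x ! j" "x ! i \<noteq> x ! j" using d p jl' ij True by (simp_all add: nth_eq_iff_index_eq)
    have a1: "x ! i < x ! p \<longleftrightarrow> x ! p < x ! j"
      using C[of p] p True jl' by (simp add: tau_def nth_list_update)
    have a2: "x ! p < x ! j \<longleftrightarrow> x ! j < x ! i"
      using C[of i] p True jl' by (simp add: tau_def nth_list_update)
    show False using a1 a2 ne1 ne2 by linarith
  next
    case False
    have a1: "x ! i < x ! p \<longleftrightarrow> x ! p < x ! i"
      using C[of p] p False ij jl' by (simp add: tau_def nth_list_update)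
    show False using a1 ne1 by linarith
  qed
qed

theorem lemma6:
  fixes x :: "int list" and i j :: nat
  assumes "distinct x"
    and "1 \<le> i" and "i \<le> length x - 1"
    and "1 \<le> j" and "j \<le> length x - 1"
    and "i \<noteq> j"
  shows "\<not> (tau x i \<approx>\<^sub>C\<^sub>T tau x j)"
proof
  assume "tau x i \<approx>\<^sub>C\<^sub>T tau x j"
  then have e: "CT (tau x i) = CT (tau x j)" by (simp add: ct_equiv_def)
  show False
  proof (cases "i < j")
    case True
    show False using lt_case[OF assms(1,2) True assms(5) e] .
  next
    case False
    then have "j < i" using assms(6) by linarith
    then show False using lt_case[OF assms(1,4) _ assms(3) e[symmetric]] by blast
  qed
qed

end
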